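(* Let $M$ and $N$ be finite groups. (1) If $M$ and $N$ are both nonabelian, then $K(M\times N)=1$. (2) If $M$ is nonabelian and $N$ is abelian, then $K(M\times N)=K(M)$.
   Context: For $\chi\in\mathrm{Irr}(G)$, the center of $\chi$ is $Z(\chi)=\{g\in G : |\chi(g)|=\chi(1)\}$. For a nonabelian group $G$, let $\mathcal{X}_G=\{\chi\in\mathrm{Irr}(G) : Z(\chi)>Z(G)\}$ (strict containment) and define $K(G)=\bigcap_{\chi\in\mathcal{X}_G}\ker(\chi)$; if $G$ is abelian, set $K(G)=G$. *)

theory Defs
  imports "HOL-Algebra.Group" "Jordan_Normal_Form.Matrix"
begin

definition mat_trace :: "complex mat \<Rightarrow> complex" where
  "mat_trace A = (\<Sum>i<dim_row A. A $$ (i, i))"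

definition is_rep :: "('a, 'b) monoid_scheme \<Rightarrow> nat \<Rightarrow> ('a \<Rightarrow> complex mat) \<Rightarrow> bool" where
  "is_rep G n \<rho> \<longleftrightarrow>
     (\<forall>g\<in>carrier G. \<rho> g \<in> carrier_mat n n) \<and>
     \<rho> \<one>\<^bsub>G\<^esub> = 1\<^sub>m n \<and>
     (\<forall>g\<in>carrier G. \<forall>h\<in>carrier G. \<rho> (g \<otimes>\<^bsub>G\<^esub> h) = \<rho> g * \<rho> h)"

definition is_subspace :: "nat \<Rightarrow> complex vec set \<Rightarrow> bool" where
  "is_subspace n W \<longleftrightarrow> W \<subseteq> carrier_vec n \<and> 0\<^sub>v n \<in> W \<and>
     (\<forall>v\<in>W. \<forall>w\<in>W. v + w \<in> W) \<and> (\<forall>c. \<forall>v\<in>W. c \<cdot>\<^sub>v v \<in> W)"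

definition is_irr_rep :: "('a, 'b) monoid_scheme \<Rightarrow> nat \<Rightarrow> ('a \<Rightarrow> complex mat) \<Rightarrow> bool" where
  "is_irr_rep G n \<rho> \<longleftrightarrow> is_rep G n \<rho> \<and> n > 0 \<and>
     (\<forall>W. is_subspace n W \<and> (\<forall>g\<in>carrier G. \<forall>w\<in>W. \<rho> g *\<^sub>v w \<in> W) \<longrightarrow>
          W = {0\<^sub>v n} \<or> W = carrier_vec n)"

definition character_of :: "('a, 'b) monoid_scheme \<Rightarrow> ('a \<Rightarrow> complex mat) \<Rightarrow> 'a \<Rightarrow> complex" where
  "character_of G \<rho> = (\<lambda>g. if g \<in> carrier G then mat_trace (\<rho> g) else 0)"

definition Irr :: "('a, 'b) monoid_scheme \<Rightarrow> ('a \<Rightarrow> complex) set" where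
  "Irr G = {\<chi>. \<exists>n \<rho>. is_irr_rep G n \<rho> \<and> \<chi> = character_of G \<rho>}"

definition group_center :: "('a, 'b) monoid_scheme \<Rightarrow> 'a set" where
  "group_center G = {z \<in> carrier G. \<forall>g\<in>carrier G. z \<otimes>\<^bsub>G\<^esub> g = g \<otimes>\<^bsub>G\<^esub> z}"

definition char_center :: "('a, 'b) monoid_scheme \<Rightarrow> ('a \<Rightarrow> complex) \<Rightarrow> 'a set" where
  "char_center G \<chi> = {g \<in> carrier G. cmod (\<chi> g) = cmod (\<chi> \<one>\<^bsub>G\<^esub>)}"

definition char_kernel :: "('a, 'b) monoid_scheme \<Rightarrow> ('a \<Rightarrow> complex) \<Rightarrow> 'a set" where
  "char_kernel G \<chi> = {g \<in> carrier G. \<chi> g = \<chi> \<one>\<^bsub>G\<^esub>}"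

definition X_set :: "('a, 'b) monoid_scheme \<Rightarrow> ('a \<Rightarrow> complex) set" where
  "X_set G = {\<chi> \<in> Irr G. group_center G \<subset> char_center G \<chi>}"

definition K_grp :: "('a, 'b) monoid_scheme \<Rightarrow> 'a set" where
  "K_grp G = (if comm_group G then carrier G
              else carrier G \<inter> (\<Inter>\<chi>\<in>X_set G. char_kernel G \<chi>))"

end

theory Submission
  imports Defs "Jordan_Normal_Form.Spectral_Radius" "Jordan_Normal_Form.Schur_Decomposition"
    "HOL-Algebra.Multiplicative_Group"
begin



lemma mat_vec_unit:
  fixes A :: "'a::semiring_1 mat"
  assumes "A \<in> carrier_mat n m" "j < m"
  shows "A *\<^sub>v unit_vec m j = col A j"
  using assms by (intro eq_vecI) (auto simp: row_def col_def)

definition vtail :: "complex vec \<Rightarrow> complex vec" where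
  "vtail v = vec (dim_vec v - 1) (\<lambda>i. v $ Suc i)"

definition ext1 :: "nat \<Rightarrow> complex mat \<Rightarrow> complex mat" where
  "ext1 n A = mat (Suc n) (Suc n) (\<lambda>(i,j). if i = 0 then (if j = 0 then 1 else 0)
      else if j = 0 then 0 else A $$ (i-1, j-1))"

lemma ext1_carrier[simp]: "ext1 n A \<in> carrier_mat (Suc n) (Suc n)"
  unfolding ext1_def by auto

lemma sum_Suc_split: "(\<Sum>l\<in>{0..<Suc n}. f l) = f 0 + (\<Sum>l\<in>{0..<n}. f (Suc l))"
  unfolding atLeast0LessThan by (rule sum.lessThan_Suc_shift)

lemma ext1_mult:
  assumes A: "A \<in> carrier_mat n n" and B: "B \<in> carrier_mat n n"
  shows "ext1 n A * ext1 n B = ext1 n (A * B)"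
proof (rule eq_matI)
  fix i j assume i: "i < dim_row (ext1 n (A * B))" and j: "j < dim_col (ext1 n (A * B))"
  then have i': "i < Suc n" and j': "j < Suc n" by (auto simp: ext1_def)
  have "(ext1 n A * ext1 n B) $$ (i, j) = (\<Sum>l\<in>{0..<Suc n}. ext1 n A $$ (i,l) * ext1 n B $$ (l,j))"
    using i' j' by (simp add: scalar_prod_def row_def col_def ext1_def)
  also have "\<dots> = ext1 n A $$ (i,0) * ext1 n B $$ (0,j) + (\<Sum>l\<in>{0..<n}. ext1 n A $$ (i,Suc l) * ext1 n B $$ (Suc l,j))"
    by (rule sum_Suc_split)
  also have "\<dots> = ext1 n (A * B) $$ (i, j)"
  proof (cases "i = 0")
    case True
    then show ?thesis using i' j' by (simp add: ext1_def)
  next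
    case False
    then obtain i0 where i0: "i = Suc i0" by (cases i, auto)
    show ?thesis
    proof (cases "j = 0")
      case True
      then show ?thesis using i' j' i0 by (simp add: ext1_def)
    next
      case False
      then obtain j0 where j0: "j = Suc j0" by (cases j, auto)
      have "(A * B) $$ (i0, j0) = (\<Sum>l\<in>{0..<n}. A $$ (i0, l) * B $$ (l, j0))"
        using A B i' j' i0 j0 by (simp add: scalar_prod_def row_def col_def)
      then show ?thesis using i' j' i0 j0 A B by (simp add: ext1_def)
    qed
  qed
  finally show "(ext1 n A * ext1 n B) $$ (i, j) = ext1 n (A * B) $$ (i, j)" .
qed (auto simp: ext1_def)

lemma ext1_one: "ext1 n (1\<^sub>m n) = 1\<^sub>m (Suc n)"
  by (rule eq_matI) (auto simp: ext1_def)

lemma vtail_carrier[simp]: "v \<in> carrier_vec (Suc n) \<Longrightarrow> vtail v \<in> carrier_vec n"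
  unfolding vtail_def by auto

lemma vtail_index[simp]: "v \<in> carrier_vec (Suc n) \<Longrightarrow> i < n \<Longrightarrow> vtail v $ i = v $ Suc i"
  unfolding vtail_def by auto

lemma ext1_mult_vec:
  assumes A: "A \<in> carrier_mat n n" and v: "v \<in> carrier_vec (Suc n)"
  shows "ext1 n A *\<^sub>v v = vec (Suc n) (\<lambda>i. if i = 0 then v $ 0 else (A *\<^sub>v vtail v) $ (i - 1))"
proof (rule eq_vecI)
  fix i assume "i < dim_vec (vec (Suc n) (\<lambda>i. if i = 0 then v $ 0 else (A *\<^sub>v vtail v) $ (i - 1)))"
  then have i: "i < Suc n" by simp
  have "(ext1 n A *\<^sub>v v) $ i = (\<Sum>l\<in>{0..<Suc n}. ext1 n A $$ (i,l) * v $ l)"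
    using i v by (simp add: scalar_prod_def row_def ext1_def)
  also have "\<dots> = ext1 n A $$ (i,0) * v $ 0 + (\<Sum>l\<in>{0..<n}. ext1 n A $$ (i,Suc l) * v $ Suc l)"
    by (rule sum_Suc_split)
  also have "\<dots> = (if i = 0 then v $ 0 else (A *\<^sub>v vtail v) $ (i - 1))"
  proof (cases "i = 0")
    case True
    then show ?thesis using i by (simp add: ext1_def)
  next
    case False
    then obtain i0 where i0: "i = Suc i0" by (cases i, auto)
    have "(A *\<^sub>v vtail v) $ i0 = (\<Sum>l\<in>{0..<n}. A $$ (i0, l) * v $ Suc l)"
      using A v i i0 by (auto simp: scalar_prod_def row_def vtail_def intro!: sum.cong)
    then show ?thesis using i i0 A by (simp add: ext1_def)
  qed
  finally show "(ext1 n A *\<^sub>v v) $ i = vec (Suc n) (\<lambda>i. if i = 0 then v $ 0 else (A *\<^sub>v vtail v) $ (i - 1)) $ i"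
    using i by simp
qed (use v in \<open>simp add: ext1_def\<close>)
lemma first_col_basis:
  fixes w :: "complex vec"
  assumes w: "w \<in> carrier_vec n" and w0: "w \<noteq> 0\<^sub>v n"
  shows "\<exists>P Q. P \<in> carrier_mat n n \<and> Q \<in> carrier_mat n n \<and> P * Q = 1\<^sub>m n \<and> Q * P = 1\<^sub>m n
     \<and> P *\<^sub>v unit_vec n 0 = w"
proof -
  interpret cof_vec_space n "TYPE(complex)" .
  define b where "b = basis_completion w"
  define ws where "ws = gram_schmidt n b"
  define W where "W = mat_of_cols n ws"
  define W' where "W' = corthogonal_inv W"
  from basis_completion[OF w w0, folded b_def]
  have span_b: "span (set b) = carrier_vec n" and dist_b: "distinct b" 
    and indep: "\<not> lin_dep (set b)" and b: "set b \<subseteq> carrier_vec n" and hdb: "hd b = w" 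
    and len_b: "length b = n" by auto
  have n: "n > 0" using w w0 by (cases n, auto)
  from hdb len_b n obtain vs where bv: "b = w # vs" by (cases b, auto)
  from gram_schmidt_result[OF b dist_b indep refl, folded ws_def]
  have ws: "set ws \<subseteq> carrier_vec n" "corthogonal ws" "length ws = n" 
    by (auto simp: len_b)
  from gram_schmidt_hd[OF w, of vs, folded bv] have hdws: "hd ws = w" unfolding ws_def .
  have orth_W: "corthogonal_mat W" using orthogonal_mat_of_cols ws unfolding W_def.
  have W: "W \<in> carrier_mat n n"
    using ws unfolding W_def using mat_of_cols_carrier(1)[of n ws] by auto
  have W': "W' \<in> carrier_mat n n" unfolding W'_def corthogonal_inv_def using W 
    by (auto simp: mat_of_rows_def)  
  from corthogonal_inv_result[OF orth_W] 
  have W'W: "inverts_mat W' W" unfolding W'_def .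
  hence WW': "inverts_mat W W'" using mat_mult_left_right_inverse[OF W' W] W' W
    unfolding inverts_mat_def by auto
  have "ws ! 0 = w" using hdws ws n by (cases ws, auto)
  then have "W *\<^sub>v unit_vec n 0 = w"
    using W ws n w unfolding W_def
    using mat_vec_unit[OF W n] by (simp add: W_def)
  then show ?thesis using W W' W'W WW' unfolding inverts_mat_def
    by (intro exI[of _ W] exI[of _ W']) auto
qed

definition Esp :: "nat \<Rightarrow> nat \<Rightarrow> complex vec set" where
  "Esp k n = {v \<in> carrier_vec n. \<forall>j. k \<le> j \<longrightarrow> j < n \<longrightarrow> v $ j = 0}"

lemma subspace_zero: "is_subspace n W \<Longrightarrow> 0\<^sub>v n \<in> W"
  unfolding is_subspace_def by auto

lemma subspace_carrier: "is_subspace n W \<Longrightarrow> w \<in> W \<Longrightarrow> w \<in> carrier_vec n"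
  unfolding is_subspace_def by auto

lemma subspace_add: "is_subspace n W \<Longrightarrow> v \<in> W \<Longrightarrow> w \<in> W \<Longrightarrow> v + w \<in> W"
  unfolding is_subspace_def by auto

lemma subspace_smult: "is_subspace n W \<Longrightarrow> v \<in> W \<Longrightarrow> c \<cdot>\<^sub>v v \<in> W"
  unfolding is_subspace_def by auto

lemma flag_trivial:
  assumes W: "is_subspace n W" and W0: "W \<subseteq> {0\<^sub>v n}"
  shows "\<exists>k P Q. k \<le> n \<and> P \<in> carrier_mat n n \<and> Q \<in> carrier_mat n n \<and> P * Q = 1\<^sub>m n \<and> Q * P = 1\<^sub>m n
     \<and> (\<forall>w\<in>W. Q *\<^sub>v w \<in> Esp k n) \<and> (\<forall>v\<in>Esp k n. P *\<^sub>v v \<in> W)"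
proof (intro exI[of _ 0] exI[of _ "1\<^sub>m n"] exI[of _ "1\<^sub>m n"] conjI)
  show "\<forall>w\<in>W. 1\<^sub>m n *\<^sub>v w \<in> Esp 0 n" using W0 by (auto simp: Esp_def)
  show "\<forall>v\<in>Esp 0 n. 1\<^sub>m n *\<^sub>v v \<in> W"
  proof
    fix v assume "v \<in> Esp 0 n"
    then have "v = 0\<^sub>v n" by (intro eq_vecI) (auto simp: Esp_def)
    then show "1\<^sub>m n *\<^sub>v v \<in> W" using subspace_zero[OF W] by simp
  qed
qed auto

lemma flag:
  assumes "is_subspace n W"
  shows "\<exists>k P Q. k \<le> n \<and> P \<in> carrier_mat n n \<and> Q \<in> carrier_mat n n \<and> P * Q = 1\<^sub>m n \<and> Q * P = 1\<^sub>m n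
     \<and> (\<forall>w\<in>W. Q *\<^sub>v w \<in> Esp k n) \<and> (\<forall>v\<in>Esp k n. P *\<^sub>v v \<in> W)"
  using assms
proof (induction n arbitrary: W)
  case 0
  have "W \<subseteq> {0\<^sub>v 0}"
  proof
    fix w assume "w \<in> W"
    then have "w \<in> carrier_vec 0" using subspace_carrier[OF 0] by auto
    then have "w = 0\<^sub>v 0" by (intro eq_vecI) auto
    then show "w \<in> {0\<^sub>v 0}" by simp
  qed
  then show ?case by (rule flag_trivial[OF 0])
next
  case (Suc n)
  note WS = Suc.prems
  show ?case
  proof (cases "W \<subseteq> {0\<^sub>v (Suc n)}")
    case True
    then show ?thesis by (rule flag_trivial[OF WS])
  next
    case False
    then obtain w where wW: "w \<in> W" and w0: "w \<noteq> 0\<^sub>v (Suc n)" by auto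
    have w: "w \<in> carrier_vec (Suc n)" using subspace_carrier[OF WS wW] .
    obtain P1 Q1 where P1: "P1 \<in> carrier_mat (Suc n) (Suc n)" and Q1: "Q1 \<in> carrier_mat (Suc n) (Suc n)"
      and PQ1: "P1 * Q1 = 1\<^sub>m (Suc n)" and QP1: "Q1 * P1 = 1\<^sub>m (Suc n)"
      and P1e: "P1 *\<^sub>v unit_vec (Suc n) 0 = w"
      using first_col_basis[OF w w0] by blast
    have Q1w: "Q1 *\<^sub>v w = unit_vec (Suc n) 0"
    proof -
      have "Q1 *\<^sub>v w = (Q1 * P1) *\<^sub>v unit_vec (Suc n) 0"
        using P1e P1 Q1 by (simp add: assoc_mult_mat_vec)
      then show ?thesis using QP1 by simp
    qed
    define W1 where "W1 = (\<lambda>u. Q1 *\<^sub>v u) ` W"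
    define W2 where "W2 = vtail ` W1"
    have W1c: "u \<in> W1 \<Longrightarrow> u \<in> carrier_vec (Suc n)" for u
      unfolding W1_def using mult_mat_vec_carrier[OF Q1 subspace_carrier[OF WS]] by auto
    have vtail_add: "a \<in> carrier_vec (Suc n) \<Longrightarrow> b \<in> carrier_vec (Suc n) \<Longrightarrow> vtail a + vtail b = vtail (a + b)" for a b
      by (intro eq_vecI) (auto simp: vtail_def)
    have vtail_smult: "c \<cdot>\<^sub>v vtail a = vtail (c \<cdot>\<^sub>v a)" for a c
      by (intro eq_vecI) (auto simp: vtail_def)
    have W2sub: "is_subspace n W2"
      unfolding is_subspace_def
    proof (intro conjI ballI allI)
      show "W2 \<subseteq> carrier_vec n" using W1c unfolding W2_def by auto
      have "0\<^sub>v (Suc n) \<in> W" using subspace_zero[OF WS] .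
      then have "Q1 *\<^sub>v 0\<^sub>v (Suc n) \<in> W1" unfolding W1_def by auto
      moreover have "Q1 *\<^sub>v 0\<^sub>v (Suc n) = 0\<^sub>v (Suc n)" using Q1 by auto
      ultimately have "0\<^sub>v (Suc n) \<in> W1" by simp
      moreover have "vtail (0\<^sub>v (Suc n)) = 0\<^sub>v n" by (intro eq_vecI) (auto simp: vtail_def)
      ultimately show "0\<^sub>v n \<in> W2" unfolding W2_def by force
    next
      fix a b assume a: "a \<in> W2" and b: "b \<in> W2"
      then obtain a' b' where a': "a' \<in> W" "a = vtail (Q1 *\<^sub>v a')" and b': "b' \<in> W" "b = vtail (Q1 *\<^sub>v b')"
        unfolding W2_def W1_def by auto
      have ac: "a' \<in> carrier_vec (Suc n)" "b' \<in> carrier_vec (Suc n)"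
        using subspace_carrier[OF WS] a' b' by auto
      have "a + b = vtail (Q1 *\<^sub>v a' + Q1 *\<^sub>v b')"
        using a' b' ac Q1 by (simp add: vtail_add)
      also have "\<dots> = vtail (Q1 *\<^sub>v (a' + b'))"
        using ac Q1 by (simp add: mult_add_distrib_mat_vec)
      finally show "a + b \<in> W2" unfolding W2_def W1_def
        using subspace_add[OF WS a'(1) b'(1)] by auto
    next
      fix c a assume a: "a \<in> W2"
      then obtain a' where a': "a' \<in> W" "a = vtail (Q1 *\<^sub>v a')"
        unfolding W2_def W1_def by auto
      have ac: "a' \<in> carrier_vec (Suc n)" using subspace_carrier[OF WS] a' by auto
      have "c \<cdot>\<^sub>v a = vtail (Q1 *\<^sub>v (c \<cdot>\<^sub>v a'))"
        using a' ac Q1 by (simp add: vtail_smult mult_mat_vec)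
      then show "c \<cdot>\<^sub>v a \<in> W2" unfolding W2_def W1_def
        using subspace_smult[OF WS a'(1)] by auto
    qed
    from Suc.IH[OF W2sub] obtain k2 P2 Q2 where k2: "k2 \<le> n" and P2: "P2 \<in> carrier_mat n n"
      and Q2: "Q2 \<in> carrier_mat n n" and PQ2: "P2 * Q2 = 1\<^sub>m n" and QP2: "Q2 * P2 = 1\<^sub>m n"
      and QW2: "\<forall>w\<in>W2. Q2 *\<^sub>v w \<in> Esp k2 n" and PW2: "\<forall>v\<in>Esp k2 n. P2 *\<^sub>v v \<in> W2"
      by blast
    define P where "P = P1 * ext1 n P2"
    define Q where "Q = ext1 n Q2 * Q1"
    have P: "P \<in> carrier_mat (Suc n) (Suc n)" unfolding P_def by (rule mult_carrier_mat[OF P1 ext1_carrier])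
    have Q: "Q \<in> carrier_mat (Suc n) (Suc n)" unfolding Q_def by (rule mult_carrier_mat[OF ext1_carrier Q1])
    have E: "ext1 n P2 \<in> carrier_mat (Suc n) (Suc n)" and F: "ext1 n Q2 \<in> carrier_mat (Suc n) (Suc n)"
      by auto
    have "P * Q = P1 * (ext1 n P2 * ext1 n Q2 * Q1)"
      unfolding P_def Q_def using assoc_mult_mat[OF P1 E mult_carrier_mat[OF F Q1]] assoc_mult_mat[OF E F Q1]
      by simp
    also have "\<dots> = P1 * Q1"
      using ext1_mult[OF P2 Q2] PQ2 ext1_one Q1 by simp
    finally have PQ: "P * Q = 1\<^sub>m (Suc n)" using PQ1 by simp
    have "Q * P = ext1 n Q2 * (Q1 * P1 * ext1 n P2)"
      unfolding P_def Q_def using assoc_mult_mat[OF F Q1 mult_carrier_mat[OF P1 E]] assoc_mult_mat[OF Q1 P1 E]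
      by simp
    also have "\<dots> = ext1 n Q2 * ext1 n P2"
      using QP1 left_mult_one_mat[OF E] by simp
    also have "\<dots> = 1\<^sub>m (Suc n)"
      using ext1_mult[OF Q2 P2] QP2 ext1_one by simp
    finally have QP: "Q * P = 1\<^sub>m (Suc n)" .
    have QW: "\<forall>w'\<in>W. Q *\<^sub>v w' \<in> Esp (Suc k2) (Suc n)"
    proof
      fix w' assume w': "w' \<in> W"
      have w'c: "w' \<in> carrier_vec (Suc n)" using subspace_carrier[OF WS w'] .
      define u where "u = Q1 *\<^sub>v w'"
      have uc: "u \<in> carrier_vec (Suc n)" using Q1 w'c unfolding u_def by auto
      have tu: "vtail u \<in> W2" unfolding W2_def W1_def u_def using w' by auto
      have Qw: "Q *\<^sub>v w' = ext1 n Q2 *\<^sub>v u"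
        unfolding Q_def u_def using assoc_mult_mat_vec[OF F Q1 w'c] .
      show "Q *\<^sub>v w' \<in> Esp (Suc k2) (Suc n)"
        unfolding Qw ext1_mult_vec[OF Q2 uc] Esp_def
        using QW2 tu by (auto simp: Esp_def)
    qed
    have PE: "\<forall>v\<in>Esp (Suc k2) (Suc n). P *\<^sub>v v \<in> W"
    proof
      fix v assume v: "v \<in> Esp (Suc k2) (Suc n)"
      have vc: "v \<in> carrier_vec (Suc n)" using v by (simp add: Esp_def)
      have "vtail v \<in> Esp k2 n" using v vc by (auto simp: Esp_def)
      then have "P2 *\<^sub>v vtail v \<in> W2" using PW2 by blast
      then obtain w' where w': "w' \<in> W" and tw: "P2 *\<^sub>v vtail v = vtail (Q1 *\<^sub>v w')"
        unfolding W2_def W1_def by auto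
      have w'c: "w' \<in> carrier_vec (Suc n)" using subspace_carrier[OF WS w'] .
      define u where "u = Q1 *\<^sub>v w'"
      have uc: "u \<in> carrier_vec (Suc n)" using Q1 w'c unfolding u_def by auto
      define c where "c = v $ 0 - u $ 0"
      define z where "z = w' + c \<cdot>\<^sub>v w"
      have zW: "z \<in> W" unfolding z_def using subspace_add[OF WS w' subspace_smult[OF WS wW]] .
      have zc: "z \<in> carrier_vec (Suc n)" using subspace_carrier[OF WS zW] .
      have "Q1 *\<^sub>v z = u + c \<cdot>\<^sub>v unit_vec (Suc n) 0"
        unfolding z_def u_def using Q1 w'c w Q1w
        by (simp add: mult_add_distrib_mat_vec mult_mat_vec)
      also have "\<dots> = ext1 n P2 *\<^sub>v v"
        unfolding ext1_mult_vec[OF P2 vc] tw[folded u_def]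
        by (intro eq_vecI) (use uc in \<open>auto simp: c_def vtail_def\<close>)
      finally have "P *\<^sub>v v = P1 *\<^sub>v (Q1 *\<^sub>v z)"
        unfolding P_def using assoc_mult_mat_vec[OF P1 E vc] by simp
      also have "\<dots> = (P1 * Q1) *\<^sub>v z" using assoc_mult_mat_vec[OF P1 Q1 zc] by simp
      also have "\<dots> = z" using PQ1 zc by simp
      finally show "P *\<^sub>v v \<in> W" using zW by simp
    qed
    show ?thesis
      by (rule exI[of _ "Suc k2"], rule exI[of _ P], rule exI[of _ Q])
        (use k2 P Q PQ QP QW PE in auto)
  qed
qed




definition sub_block :: "complex mat \<Rightarrow> nat \<Rightarrow> complex mat" where
  "sub_block A k = mat k k (\<lambda>(i,j). A $$ (i,j))"

definition low_block :: "complex mat \<Rightarrow> nat \<Rightarrow> nat \<Rightarrow> complex mat" where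
  "low_block A k n = mat (n-k) (n-k) (\<lambda>(i,j). A $$ (i+k, j+k))"

definition block_up :: "complex mat \<Rightarrow> nat \<Rightarrow> nat \<Rightarrow> bool" where
  "block_up A k n \<longleftrightarrow> (\<forall>i j. k \<le> i \<longrightarrow> i < n \<longrightarrow> j < k \<longrightarrow> A $$ (i,j) = 0)"

lemma sum_split_k:
  fixes k n :: nat
  assumes "k \<le> n"
  shows "(\<Sum>l\<in>{0..<n}. f l) = (\<Sum>l\<in>{0..<k}. f l) + (\<Sum>l\<in>{0..<n-k}. f (l + k))"
proof -
  have "(\<Sum>l\<in>{0..<n}. f l) = (\<Sum>l\<in>{0..<k}. f l) + (\<Sum>l\<in>{k..<n}. f l)"
    using sum.atLeastLessThan_concat[of "0::nat" k n f] assms by simp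
  also have "(\<Sum>l\<in>{k..<n}. f l) = (\<Sum>l\<in>{0..<n-k}. f (l + k))"
    using sum.shift_bounds_nat_ivl[of f 0 k "n-k"] assms by simp
  finally show ?thesis .
qed

lemma block_mult:
  assumes A: "A \<in> carrier_mat n n" and B: "B \<in> carrier_mat n n" and k: "k \<le> n"
    and bA: "block_up A k n" and bB: "block_up B k n"
  shows "sub_block (A * B) k = sub_block A k * sub_block B k"
    and "low_block (A * B) k n = low_block A k n * low_block B k n"
    and "block_up (A * B) k n"
proof -
  show "sub_block (A * B) k = sub_block A k * sub_block B k"
  proof (rule eq_matI)
    fix i j assume i: "i < dim_row (sub_block A k * sub_block B k)" and j: "j < dim_col (sub_block A k * sub_block B k)"
    then have i: "i < k" and j: "j < k" by (auto simp: sub_block_def)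
    have "(A * B) $$ (i,j) = (\<Sum>l\<in>{0..<n}. A $$ (i,l) * B $$ (l,j))"
      using A B i j k by (simp add: scalar_prod_def row_def col_def)
    also have "\<dots> = (\<Sum>l\<in>{0..<k}. A $$ (i,l) * B $$ (l,j)) + (\<Sum>l\<in>{0..<n-k}. A $$ (i,l+k) * B $$ (l+k,j))"
      by (rule sum_split_k[OF k])
    also have "(\<Sum>l\<in>{0..<n-k}. A $$ (i,l+k) * B $$ (l+k,j)) = 0"
      using bB j by (intro sum.neutral) (auto simp: block_up_def)
    finally show "sub_block (A * B) k $$ (i, j) = (sub_block A k * sub_block B k) $$ (i, j)"
      using i j by (simp add: sub_block_def scalar_prod_def row_def col_def)
  qed (auto simp: sub_block_def)
  show "low_block (A * B) k n = low_block A k n * low_block B k n"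
  proof (rule eq_matI)
    fix i j assume i: "i < dim_row (low_block A k n * low_block B k n)" and j: "j < dim_col (low_block A k n * low_block B k n)"
    then have i: "i < n - k" and j: "j < n - k" by (auto simp: low_block_def)
    have "(A * B) $$ (i+k,j+k) = (\<Sum>l\<in>{0..<n}. A $$ (i+k,l) * B $$ (l,j+k))"
      using A B i j k by (simp add: scalar_prod_def row_def col_def)
    also have "\<dots> = (\<Sum>l\<in>{0..<k}. A $$ (i+k,l) * B $$ (l,j+k)) + (\<Sum>l\<in>{0..<n-k}. A $$ (i+k,l+k) * B $$ (l+k,j+k))"
      by (rule sum_split_k[OF k])
    also have "(\<Sum>l\<in>{0..<k}. A $$ (i+k,l) * B $$ (l,j+k)) = 0"
      using bA i by (intro sum.neutral) (auto simp: block_up_def)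
    finally show "low_block (A * B) k n $$ (i, j) = (low_block A k n * low_block B k n) $$ (i, j)"
      using i j by (simp add: low_block_def scalar_prod_def row_def col_def)
  qed (auto simp: low_block_def)
  show "block_up (A * B) k n"
    unfolding block_up_def
  proof (intro allI impI)
    fix i j assume i1: "k \<le> i" and i2: "i < n" and j: "j < k"
    have "(A * B) $$ (i,j) = (\<Sum>l\<in>{0..<n}. A $$ (i,l) * B $$ (l,j))"
      using A B i2 j k by (simp add: scalar_prod_def row_def col_def)
    also have "\<dots> = (\<Sum>l\<in>{0..<k}. A $$ (i,l) * B $$ (l,j)) + (\<Sum>l\<in>{0..<n-k}. A $$ (i,l+k) * B $$ (l+k,j))"
      by (rule sum_split_k[OF k])
    also have "(\<Sum>l\<in>{0..<k}. A $$ (i,l) * B $$ (l,j)) = 0"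
      using bA i1 i2 by (intro sum.neutral) (auto simp: block_up_def)
    also have "(\<Sum>l\<in>{0..<n-k}. A $$ (i,l+k) * B $$ (l+k,j)) = 0"
      using bB j by (intro sum.neutral) (auto simp: block_up_def)
    finally show "(A * B) $$ (i,j) = 0" by simp
  qed
qed

lemma mat_trace_carrier: "A \<in> carrier_mat n n \<Longrightarrow> mat_trace A = (\<Sum>i\<in>{0..<n}. A $$ (i,i))"
  unfolding mat_trace_def by (simp add: atLeast0LessThan)

lemma mat_trace_split:
  assumes A: "A \<in> carrier_mat n n" and k: "k \<le> n"
  shows "mat_trace A = mat_trace (sub_block A k) + mat_trace (low_block A k n)"
proof -
  have "mat_trace A = (\<Sum>i\<in>{0..<k}. A $$ (i,i)) + (\<Sum>i\<in>{0..<n-k}. A $$ (i+k,i+k))"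
    unfolding mat_trace_carrier[OF A] by (rule sum_split_k[OF k])
  moreover have "mat_trace (sub_block A k) = (\<Sum>i\<in>{0..<k}. A $$ (i,i))"
    by (subst mat_trace_carrier[of _ k]) (auto simp: sub_block_def)
  moreover have "mat_trace (low_block A k n) = (\<Sum>i\<in>{0..<n-k}. A $$ (i+k,i+k))"
    by (subst mat_trace_carrier[of _ "n-k"]) (auto simp: low_block_def)
  ultimately show ?thesis by simp
qed

lemma mat_trace_comm:
  assumes A: "A \<in> carrier_mat n m" and B: "B \<in> carrier_mat m n"
  shows "mat_trace (A * B) = mat_trace (B * A)"
proof -
  have "mat_trace (A * B) = (\<Sum>i\<in>{0..<n}. \<Sum>l\<in>{0..<m}. A $$ (i,l) * B $$ (l,i))"
    using A B unfolding mat_trace_def by (simp add: atLeast0LessThan scalar_prod_def row_def col_def)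
  also have "\<dots> = (\<Sum>l\<in>{0..<m}. \<Sum>i\<in>{0..<n}. B $$ (l,i) * A $$ (i,l))"
    by (subst sum.swap) (simp add: mult.commute)
  also have "\<dots> = mat_trace (B * A)"
    using A B unfolding mat_trace_def by (simp add: atLeast0LessThan scalar_prod_def row_def col_def)
  finally show ?thesis .
qed

lemma mat_trace_conj:
  assumes A: "A \<in> carrier_mat n n" and P: "P \<in> carrier_mat n n" and Q: "Q \<in> carrier_mat n n"
    and PQ: "P * Q = 1\<^sub>m n"
  shows "mat_trace (Q * A * P) = mat_trace A"
proof -
  have "mat_trace (Q * A * P) = mat_trace (P * (Q * A))"
    using mat_trace_comm[OF mult_carrier_mat[OF Q A] P] .
  also have "P * (Q * A) = (P * Q) * A" using assoc_mult_mat[OF P Q A] by simp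
  also have "\<dots> = A" using PQ A by simp
  finally show ?thesis .
qed

lemma mat_trace_one[simp]: "mat_trace (1\<^sub>m n) = of_nat n"
  unfolding mat_trace_def by simp

lemma mat_trace_dim0: "A \<in> carrier_mat 0 0 \<Longrightarrow> mat_trace A = 0"
  unfolding mat_trace_def by simp




lemma conj_mult:
  fixes A B P Q :: "complex mat"
  assumes A: "A \<in> carrier_mat n n" and B: "B \<in> carrier_mat n n"
    and P: "P \<in> carrier_mat n n" and Q: "Q \<in> carrier_mat n n" and PQ: "P * Q = 1\<^sub>m n"
  shows "(Q * A * P) * (Q * B * P) = Q * (A * B) * P"
proof -
  have X: "Q * A \<in> carrier_mat n n" and Y: "B * P \<in> carrier_mat n n" using A B P Q by auto
  have "Q * B * P = Q * (B * P)" using assoc_mult_mat[OF Q B P] .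
  then have "(Q * A * P) * (Q * B * P) = (Q * A) * (P * (Q * (B * P)))"
    using assoc_mult_mat[OF X P mult_carrier_mat[OF Q Y]] by simp
  also have "P * (Q * (B * P)) = (P * Q) * (B * P)" using assoc_mult_mat[OF P Q Y] by simp
  also have "\<dots> = B * P" using PQ left_mult_one_mat[OF Y] by simp
  also have "(Q * A) * (B * P) = Q * (A * (B * P))" using assoc_mult_mat[OF Q A Y] .
  also have "A * (B * P) = (A * B) * P" using assoc_mult_mat[OF A B P] by simp
  also have "Q * ((A * B) * P) = Q * (A * B) * P"
    using assoc_mult_mat[OF Q mult_carrier_mat[OF A B] P] by simp
  finally show ?thesis .
qed

lemma is_repD:
  assumes "is_rep G n \<rho>"
  shows "\<And>g. g \<in> carrier G \<Longrightarrow> \<rho> g \<in> carrier_mat n n"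
    and "\<rho> \<one>\<^bsub>G\<^esub> = 1\<^sub>m n"
    and "\<And>g h. g \<in> carrier G \<Longrightarrow> h \<in> carrier G \<Longrightarrow> \<rho> (g \<otimes>\<^bsub>G\<^esub> h) = \<rho> g * \<rho> h"
  using assms unfolding is_rep_def by auto

lemma rep_split:
  assumes G: "group G" and rho: "is_rep G n \<rho>" and W: "is_subspace n W"
    and inv: "\<forall>g\<in>carrier G. \<forall>w\<in>W. \<rho> g *\<^sub>v w \<in> W"
    and W0: "W \<noteq> {0\<^sub>v n}" and Wn: "W \<noteq> carrier_vec n"
  shows "\<exists>k \<rho>1 \<rho>2. 0 < k \<and> k < n \<and> is_rep G k \<rho>1 \<and> is_rep G (n-k) \<rho>2 \<and>
     (\<forall>g\<in>carrier G. mat_trace (\<rho> g) = mat_trace (\<rho>1 g) + mat_trace (\<rho>2 g))"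
proof -
  interpret group G by fact
  obtain k P Q where k: "k \<le> n" and P: "P \<in> carrier_mat n n" and Q: "Q \<in> carrier_mat n n"
    and PQ: "P * Q = 1\<^sub>m n" and QP: "Q * P = 1\<^sub>m n"
    and QW: "\<forall>w\<in>W. Q *\<^sub>v w \<in> Esp k n" and PE: "\<forall>v\<in>Esp k n. P *\<^sub>v v \<in> W"
    using flag[OF W] by blast
  note rc = is_repD(1)[OF rho]
  define \<rho>' where "\<rho>' g = Q * \<rho> g * P" for g
  have r'c: "g \<in> carrier G \<Longrightarrow> \<rho>' g \<in> carrier_mat n n" for g
    unfolding \<rho>'_def using rc P Q by (metis mult_carrier_mat)
  have bu: "block_up (\<rho>' g) k n" if g: "g \<in> carrier G" for g
    unfolding block_up_def
  proof (intro allI impI)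
    fix i j assume i1: "k \<le> i" and i2: "i < n" and j: "j < k"
    define e where "e = (unit_vec n j :: complex vec)"
    have eE: "e \<in> Esp k n" unfolding e_def Esp_def using j by auto
    have ec: "e \<in> carrier_vec n" unfolding e_def by simp
    have "P *\<^sub>v e \<in> W" using PE eE by blast
    then have "\<rho> g *\<^sub>v (P *\<^sub>v e) \<in> W" using inv g by blast
    then have "Q *\<^sub>v (\<rho> g *\<^sub>v (P *\<^sub>v e)) \<in> Esp k n" using QW by blast
    moreover have "\<rho>' g *\<^sub>v e = Q *\<^sub>v (\<rho> g *\<^sub>v (P *\<^sub>v e))"
      unfolding \<rho>'_def
      using assoc_mult_mat_vec[OF mult_carrier_mat[OF Q rc[OF g]] P ec]
        assoc_mult_mat_vec[OF Q rc[OF g] mult_mat_vec_carrier[OF P ec]] by simp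
    moreover have "(\<rho>' g *\<^sub>v e) $ i = \<rho>' g $$ (i,j)"
      unfolding e_def mat_vec_unit[OF r'c[OF g]] using j k i2 r'c[OF g] by simp
    ultimately show "\<rho>' g $$ (i,j) = 0" using i1 i2 by (auto simp: Esp_def)
  qed
  have r'mult: "\<rho>' (g \<otimes>\<^bsub>G\<^esub> h) = \<rho>' g * \<rho>' h" if "g \<in> carrier G" "h \<in> carrier G" for g h
    unfolding \<rho>'_def using conj_mult[OF rc[OF that(1)] rc[OF that(2)] P Q PQ] is_repD(3)[OF rho that]
    by simp
  have r'one: "\<rho>' \<one>\<^bsub>G\<^esub> = 1\<^sub>m n"
    unfolding \<rho>'_def using is_repD(2)[OF rho] QP Q by simp
  define \<rho>1 where "\<rho>1 g = sub_block (\<rho>' g) k" for g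
  define \<rho>2 where "\<rho>2 g = low_block (\<rho>' g) k n" for g
  have rep1: "is_rep G k \<rho>1"
    unfolding is_rep_def
  proof (intro conjI ballI)
    show "\<rho>1 g \<in> carrier_mat k k" for g unfolding \<rho>1_def sub_block_def by simp
    show "\<rho>1 \<one>\<^bsub>G\<^esub> = 1\<^sub>m k" unfolding \<rho>1_def r'one sub_block_def using k
      by (intro eq_matI) auto
    show "\<rho>1 (g \<otimes>\<^bsub>G\<^esub> h) = \<rho>1 g * \<rho>1 h" if "g \<in> carrier G" "h \<in> carrier G" for g h
      unfolding \<rho>1_def r'mult[OF that]
      by (rule block_mult(1)[OF r'c[OF that(1)] r'c[OF that(2)] k bu[OF that(1)] bu[OF that(2)]])
  qed
  have rep2: "is_rep G (n-k) \<rho>2"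
    unfolding is_rep_def
  proof (intro conjI ballI)
    show "\<rho>2 g \<in> carrier_mat (n-k) (n-k)" for g unfolding \<rho>2_def low_block_def by simp
    show "\<rho>2 \<one>\<^bsub>G\<^esub> = 1\<^sub>m (n-k)" unfolding \<rho>2_def r'one low_block_def using k
      by (intro eq_matI) auto
    show "\<rho>2 (g \<otimes>\<^bsub>G\<^esub> h) = \<rho>2 g * \<rho>2 h" if "g \<in> carrier G" "h \<in> carrier G" for g h
      unfolding \<rho>2_def r'mult[OF that]
      by (rule block_mult(2)[OF r'c[OF that(1)] r'c[OF that(2)] k bu[OF that(1)] bu[OF that(2)]])
  qed
  have tr: "mat_trace (\<rho> g) = mat_trace (\<rho>1 g) + mat_trace (\<rho>2 g)" if g: "g \<in> carrier G" for g
  proof -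
    have "mat_trace (\<rho> g) = mat_trace (\<rho>' g)"
      unfolding \<rho>'_def using mat_trace_conj[OF rc[OF g] P Q PQ] by simp
    also have "\<dots> = mat_trace (\<rho>1 g) + mat_trace (\<rho>2 g)"
      unfolding \<rho>1_def \<rho>2_def by (rule mat_trace_split[OF r'c[OF g] k])
    finally show ?thesis .
  qed
  have k0: "0 < k"
  proof (rule ccontr)
    assume "\<not> 0 < k"
    then have k0: "k = 0" by simp
    have "0\<^sub>v n \<in> W" using subspace_zero[OF W] .
    with W0 obtain w where wW: "w \<in> W" and w0: "w \<noteq> 0\<^sub>v n" by blast
    have wc: "w \<in> carrier_vec n" using subspace_carrier[OF W wW] .
    have "Q *\<^sub>v w \<in> Esp 0 n" using QW wW k0 by blast
    then have "Q *\<^sub>v w = 0\<^sub>v n" using Q by (intro eq_vecI) (auto simp: Esp_def)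
    then have "P *\<^sub>v (Q *\<^sub>v w) = 0\<^sub>v n" using P by auto
    moreover have "P *\<^sub>v (Q *\<^sub>v w) = w"
      using assoc_mult_mat_vec[OF P Q wc] PQ wc by simp
    ultimately show False using w0 by simp
  qed
  have kn: "k < n"
  proof (rule ccontr)
    assume "\<not> k < n"
    then have kn: "k = n" using k by simp
    have "carrier_vec n \<subseteq> W"
    proof
      fix v :: "complex vec" assume vc: "v \<in> carrier_vec n"
      have "Q *\<^sub>v v \<in> Esp k n" unfolding Esp_def using kn Q vc by auto
      then have "P *\<^sub>v (Q *\<^sub>v v) \<in> W" using PE by blast
      moreover have "P *\<^sub>v (Q *\<^sub>v v) = v"
        using assoc_mult_mat_vec[OF P Q vc] PQ vc by simp
      ultimately show "v \<in> W" by simp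
    qed
    moreover have "W \<subseteq> carrier_vec n" using W unfolding is_subspace_def by auto
    ultimately show False using Wn by blast
  qed
  show ?thesis using k0 kn rep1 rep2 tr by blast
qed

lemma irr_exists:
  assumes G: "group G" and h: "h \<in> carrier G"
  shows "is_rep G n \<rho> \<Longrightarrow> mat_trace (\<rho> h) \<noteq> of_nat n \<Longrightarrow>
    \<exists>m \<sigma>. is_irr_rep G m \<sigma> \<and> mat_trace (\<sigma> h) \<noteq> of_nat m"
proof (induction n arbitrary: \<rho> rule: less_induct)
  case (less n \<rho>)
  show ?case
  proof (cases "is_irr_rep G n \<rho>")
    case True
    then show ?thesis using less.prems(2) by blast
  next
    case False
    have n0: "n > 0"
    proof (rule ccontr)
      assume "\<not> n > 0"
      then have "n = 0" by simp
      then have "mat_trace (\<rho> h) = 0" using is_repD(1)[OF less.prems(1) h] mat_trace_dim0 by simp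
      then show False using less.prems(2) \<open>n = 0\<close> by simp
    qed
    from False less.prems(1) n0 obtain W where W: "is_subspace n W"
      and inv: "\<forall>g\<in>carrier G. \<forall>w\<in>W. \<rho> g *\<^sub>v w \<in> W"
      and W0: "W \<noteq> {0\<^sub>v n}" and Wn: "W \<noteq> carrier_vec n"
      unfolding is_irr_rep_def by blast
    from rep_split[OF G less.prems(1) W inv W0 Wn] obtain k \<rho>1 \<rho>2 where
      k0: "0 < k" and kn: "k < n" and r1: "is_rep G k \<rho>1" and r2: "is_rep G (n-k) \<rho>2"
      and tr: "\<forall>g\<in>carrier G. mat_trace (\<rho> g) = mat_trace (\<rho>1 g) + mat_trace (\<rho>2 g)"
      by blast
    have nk: "(of_nat n :: complex) = of_nat k + of_nat (n - k)" using kn by simp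
    show ?thesis
    proof (cases "mat_trace (\<rho>1 h) = of_nat k")
      case True
      then have "mat_trace (\<rho>2 h) \<noteq> of_nat (n-k)" using tr h less.prems(2) nk by auto
      then show ?thesis using less.IH[of "n-k" \<rho>2] r2 k0 kn by auto
    next
      case False
      then show ?thesis using less.IH[of k \<rho>1] r1 kn by auto
    qed
  qed
qed

lemma regular_rep:
  assumes G: "group G" and fin: "finite (carrier G)" and h: "h \<in> carrier G" and h1: "h \<noteq> \<one>\<^bsub>G\<^esub>"
  shows "\<exists>n \<rho>. is_rep G n \<rho> \<and> mat_trace (\<rho> h) \<noteq> of_nat n"
proof -
  interpret group G by fact
  define N where "N = card (carrier G)"
  obtain f where f: "bij_betw f {0..<N} (carrier G)"
    using ex_bij_betw_nat_finite[OF fin] unfolding N_def by blast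
  have fc: "i < N \<Longrightarrow> f i \<in> carrier G" for i using f by (auto simp: bij_betw_def)
  have finj: "i < N \<Longrightarrow> j < N \<Longrightarrow> f i = f j \<longleftrightarrow> i = j" for i j
    using f by (auto simp: bij_betw_def inj_on_def)
  have fsurj: "x \<in> carrier G \<Longrightarrow> \<exists>i<N. f i = x" for x
    using f by (force simp: bij_betw_def)
  have N0: "N > 0" unfolding N_def using fin one_closed by (auto simp: card_gt_0_iff)
  define \<rho> where "\<rho> g = mat N N (\<lambda>(i,j). if f i = g \<otimes>\<^bsub>G\<^esub> f j then 1 else (0::complex))" for g
  have rep: "is_rep G N \<rho>"
    unfolding is_rep_def
  proof (intro conjI ballI)
    show "\<rho> g \<in> carrier_mat N N" for g unfolding \<rho>_def by simp
    show "\<rho> \<one>\<^bsub>G\<^esub> = 1\<^sub>m N" unfolding \<rho>_def by (intro eq_matI) (auto simp: fc finj)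
    show "\<rho> (g \<otimes>\<^bsub>G\<^esub> g') = \<rho> g * \<rho> g'" if g: "g \<in> carrier G" and g': "g' \<in> carrier G" for g g'
    proof (rule eq_matI)
      fix i j assume "i < dim_row (\<rho> g * \<rho> g')" and "j < dim_col (\<rho> g * \<rho> g')"
      then have i: "i < N" and j: "j < N" unfolding \<rho>_def by auto
      obtain l0 where l0: "l0 < N" and fl0: "f l0 = g' \<otimes>\<^bsub>G\<^esub> f j" using fsurj[of "g' \<otimes>\<^bsub>G\<^esub> f j"] g' fc[OF j] by auto
      have "(\<rho> g * \<rho> g') $$ (i,j) = (\<Sum>l\<in>{0..<N}. \<rho> g $$ (i,l) * \<rho> g' $$ (l,j))"
        using i j unfolding \<rho>_def by (simp add: scalar_prod_def row_def col_def)
      also have "\<dots> = (\<Sum>l\<in>{0..<N}. if l = l0 then (if f i = g \<otimes>\<^bsub>G\<^esub> f l0 then 1 else 0) else 0)"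
      proof (rule sum.cong)
        fix l assume "l \<in> {0..<N}"
        then have l: "l < N" by simp
        have "f l = g' \<otimes>\<^bsub>G\<^esub> f j \<longleftrightarrow> l = l0" using fl0 finj[OF l l0] by simp
        then show "\<rho> g $$ (i,l) * \<rho> g' $$ (l,j) = (if l = l0 then (if f i = g \<otimes>\<^bsub>G\<^esub> f l0 then 1 else 0) else 0)"
          using i j l unfolding \<rho>_def by auto
      qed simp
      also have "\<dots> = (if f i = g \<otimes>\<^bsub>G\<^esub> f l0 then 1 else 0)" using l0 by simp
      also have "\<dots> = \<rho> (g \<otimes>\<^bsub>G\<^esub> g') $$ (i,j)"
        unfolding \<rho>_def using i j fl0 g g' fc[OF j] by (simp add: m_assoc)
      finally show "\<rho> (g \<otimes>\<^bsub>G\<^esub> g') $$ (i, j) = (\<rho> g * \<rho> g') $$ (i, j)" by simp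
    qed (auto simp: \<rho>_def)
  qed
  have "mat_trace (\<rho> h) = (\<Sum>i\<in>{0..<N}. \<rho> h $$ (i,i))"
    by (rule mat_trace_carrier) (simp add: \<rho>_def)
  also have "\<dots> = 0"
  proof (rule sum.neutral, rule ballI)
    fix i assume "i \<in> {0..<N}"
    then have i: "i < N" by simp
    have "f i \<noteq> h \<otimes>\<^bsub>G\<^esub> f i" using r_cancel_one'[OF fc[OF i] h] h1 by simp
    then show "\<rho> h $$ (i,i) = 0" unfolding \<rho>_def using i by simp
  qed
  finally have "mat_trace (\<rho> h) \<noteq> of_nat N" using N0 by simp
  then show ?thesis using rep by blast
qed

lemma irr_separates:
  assumes G: "group G" and fin: "finite (carrier G)" and h: "h \<in> carrier G" and h1: "h \<noteq> \<one>\<^bsub>G\<^esub>"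
  shows "\<exists>m \<sigma>. is_irr_rep G m \<sigma> \<and> mat_trace (\<sigma> h) \<noteq> of_nat m"
  using regular_rep[OF assms] irr_exists[OF G h] by blast




lemma is_irr_repD:
  assumes "is_irr_rep G n \<sigma>"
  shows "is_rep G n \<sigma>" and "n > 0"
    and "\<And>W. is_subspace n W \<Longrightarrow> (\<forall>g\<in>carrier G. \<forall>w\<in>W. \<sigma> g *\<^sub>v w \<in> W) \<Longrightarrow> W = {0\<^sub>v n} \<or> W = carrier_vec n"
  using assms unfolding is_irr_rep_def by auto

lemma schur_eigen:
  assumes irr: "is_irr_rep G n \<sigma>" and A: "A \<in> carrier_mat n n"
    and comm: "\<forall>g\<in>carrier G. A * \<sigma> g = \<sigma> g * A"
  shows "\<exists>c. \<forall>v\<in>carrier_vec n. A *\<^sub>v v = c \<cdot>\<^sub>v v"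
proof -
  have n: "n > 0" using is_irr_repD(2)[OF irr] .
  note rc = is_repD(1)[OF is_irr_repD(1)[OF irr]]
  from spectrum_non_empty[OF A n] obtain c where "eigenvalue A c" unfolding spectrum_def by auto
  then obtain v0 where ev: "eigenvector A v0 c" unfolding eigenvalue_def by auto
  have v0: "v0 \<in> carrier_vec n" "v0 \<noteq> 0\<^sub>v n" "A *\<^sub>v v0 = c \<cdot>\<^sub>v v0"
    using ev A unfolding eigenvector_def by auto
  define W where "W = {v \<in> carrier_vec n. A *\<^sub>v v = c \<cdot>\<^sub>v v}"
  have W: "is_subspace n W"
    unfolding is_subspace_def W_def
  proof (intro conjI ballI allI)
    show "{v \<in> carrier_vec n. A *\<^sub>v v = c \<cdot>\<^sub>v v} \<subseteq> carrier_vec n" by auto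
    show "0\<^sub>v n \<in> {v \<in> carrier_vec n. A *\<^sub>v v = c \<cdot>\<^sub>v v}" using A by auto
  next
    fix v w assume v: "v \<in> {v \<in> carrier_vec n. A *\<^sub>v v = c \<cdot>\<^sub>v v}" and w: "w \<in> {v \<in> carrier_vec n. A *\<^sub>v v = c \<cdot>\<^sub>v v}"
    then have "A *\<^sub>v (v + w) = c \<cdot>\<^sub>v (v + w)"
      using A by (auto simp: mult_add_distrib_mat_vec smult_add_distrib_vec)
    then show "v + w \<in> {v \<in> carrier_vec n. A *\<^sub>v v = c \<cdot>\<^sub>v v}" using v w by auto
  next
    fix d v assume v: "v \<in> {v \<in> carrier_vec n. A *\<^sub>v v = c \<cdot>\<^sub>v v}"
    then have "A *\<^sub>v (d \<cdot>\<^sub>v v) = c \<cdot>\<^sub>v (d \<cdot>\<^sub>v v)"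
      using A by (auto simp: mult_mat_vec smult_smult_assoc mult.commute)
    then show "d \<cdot>\<^sub>v v \<in> {v \<in> carrier_vec n. A *\<^sub>v v = c \<cdot>\<^sub>v v}" using v by auto
  qed
  have inv: "\<forall>g\<in>carrier G. \<forall>w\<in>W. \<sigma> g *\<^sub>v w \<in> W"
  proof (intro ballI)
    fix g w assume g: "g \<in> carrier G" and w: "w \<in> W"
    have wc: "w \<in> carrier_vec n" and Aw: "A *\<^sub>v w = c \<cdot>\<^sub>v w" using w unfolding W_def by auto
    have "A *\<^sub>v (\<sigma> g *\<^sub>v w) = (A * \<sigma> g) *\<^sub>v w" using assoc_mult_mat_vec[OF A rc[OF g] wc] by simp
    also have "\<dots> = (\<sigma> g * A) *\<^sub>v w" using comm g by simp
    also have "\<dots> = \<sigma> g *\<^sub>v (c \<cdot>\<^sub>v w)" using assoc_mult_mat_vec[OF rc[OF g] A wc] Aw by simp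
    also have "\<dots> = c \<cdot>\<^sub>v (\<sigma> g *\<^sub>v w)" using rc[OF g] wc by (simp add: mult_mat_vec)
    finally show "\<sigma> g *\<^sub>v w \<in> W" unfolding W_def using rc[OF g] wc by auto
  qed
  have "W \<noteq> {0\<^sub>v n}" using v0 unfolding W_def by auto
  then have "W = carrier_vec n" using is_irr_repD(3)[OF irr W inv] by blast
  then show ?thesis unfolding W_def by auto
qed

lemma scalar_action_mat:
  fixes A :: "complex mat"
  assumes A: "A \<in> carrier_mat n n" and act: "\<forall>v\<in>carrier_vec n. A *\<^sub>v v = c \<cdot>\<^sub>v v"
  shows "A = c \<cdot>\<^sub>m 1\<^sub>m n"
proof (rule eq_matI)
  fix i j assume i: "i < dim_row (c \<cdot>\<^sub>m 1\<^sub>m n)" and j: "j < dim_col (c \<cdot>\<^sub>m 1\<^sub>m n)"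
  then have i: "i < n" and j: "j < n" by auto
  have "A $$ (i,j) = (A *\<^sub>v unit_vec n j) $ i" using mat_vec_unit[OF A j] A i j by simp
  also have "\<dots> = (c \<cdot>\<^sub>v unit_vec n j) $ i" using act by simp
  finally show "A $$ (i,j) = (c \<cdot>\<^sub>m 1\<^sub>m n) $$ (i,j)" using i j by simp
qed (use A in auto)

lemma central_scalar:
  assumes G: "group G" and fin: "finite (carrier G)" and irr: "is_irr_rep G n \<sigma>"
    and z: "z \<in> carrier G" and zc: "\<forall>g\<in>carrier G. z \<otimes>\<^bsub>G\<^esub> g = g \<otimes>\<^bsub>G\<^esub> z"
  shows "\<exists>c. \<sigma> z = c \<cdot>\<^sub>m 1\<^sub>m n \<and> cmod c = 1"
proof -
  interpret group G by fact
  note rep = is_irr_repD(1)[OF irr]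
  note rc = is_repD(1)[OF rep]
  have n: "n > 0" using is_irr_repD(2)[OF irr] .
  have comm: "\<forall>g\<in>carrier G. \<sigma> z * \<sigma> g = \<sigma> g * \<sigma> z"
  proof
    fix g assume g: "g \<in> carrier G"
    have "\<sigma> z * \<sigma> g = \<sigma> (z \<otimes>\<^bsub>G\<^esub> g)" using is_repD(3)[OF rep z g] by simp
    also have "\<dots> = \<sigma> (g \<otimes>\<^bsub>G\<^esub> z)" using zc g by simp
    also have "\<dots> = \<sigma> g * \<sigma> z" using is_repD(3)[OF rep g z] by simp
    finally show "\<sigma> z * \<sigma> g = \<sigma> g * \<sigma> z" .
  qed
  obtain c where act: "\<forall>v\<in>carrier_vec n. \<sigma> z *\<^sub>v v = c \<cdot>\<^sub>v v"
    using schur_eigen[OF irr rc[OF z] comm] by blast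
  have pow: "\<sigma> (z [^]\<^bsub>G\<^esub> k) *\<^sub>v v = c ^ k \<cdot>\<^sub>v v" if v: "v \<in> carrier_vec n" for k v
  proof (induction k)
    case 0
    then show ?case using is_repD(2)[OF rep] v by simp
  next
    case (Suc k)
    have "\<sigma> (z [^]\<^bsub>G\<^esub> Suc k) = \<sigma> (z [^]\<^bsub>G\<^esub> k) * \<sigma> z"
      using is_repD(3)[OF rep] z by simp
    then have "\<sigma> (z [^]\<^bsub>G\<^esub> Suc k) *\<^sub>v v = \<sigma> (z [^]\<^bsub>G\<^esub> k) *\<^sub>v (c \<cdot>\<^sub>v v)"
      using assoc_mult_mat_vec[OF rc[OF nat_pow_closed[OF z]] rc[OF z] v] act v by simp
    also have "\<dots> = c \<cdot>\<^sub>v (c ^ k \<cdot>\<^sub>v v)"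
      using mult_mat_vec[OF rc[OF nat_pow_closed[OF z]] v, where k=c] Suc by simp
    finally show ?case by (simp add: smult_smult_assoc mult.commute)
  qed
  define N where "N = order G"
  have N: "N > 0" unfolding N_def order_def using fin one_closed by (auto simp: card_gt_0_iff)
  have "z [^]\<^bsub>G\<^esub> N = \<one>\<^bsub>G\<^esub>" unfolding N_def using pow_order_eq_1[OF z] .
  then have "unit_vec n 0 = c ^ N \<cdot>\<^sub>v unit_vec n 0"
    using pow[of "unit_vec n 0" N] is_repD(2)[OF rep] by simp
  then have "(unit_vec n 0 :: complex vec) $ 0 = (c ^ N \<cdot>\<^sub>v unit_vec n 0) $ 0" by simp
  then have cN: "c ^ N = 1" using n by simp
  have "cmod c ^ N = 1" using arg_cong[OF cN, of cmod] by (simp add: norm_power)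
  then have cm: "cmod c = 1"
    using power_eq_imp_eq_base[of "cmod c" N 1] N by simp
  show ?thesis using scalar_action_mat[OF rc[OF z] act] cm by blast
qed

lemma mat_trace_smult_one: "mat_trace (c \<cdot>\<^sub>m 1\<^sub>m n) = c * of_nat n"
  unfolding mat_trace_def by (simp add: mult.commute)




lemma mat_trace_smult:
  assumes "A \<in> carrier_mat n n"
  shows "mat_trace (c \<cdot>\<^sub>m A) = c * mat_trace A"
  using assms unfolding mat_trace_def by (simp add: sum_distrib_left)

lemma char_one:
  assumes G: "group G" and r: "is_rep G n \<rho>"
  shows "character_of G \<rho> \<one>\<^bsub>G\<^esub> = of_nat n"
  unfolding character_of_def using group.is_monoid[OF G] monoid.one_closed is_repD(2)[OF r]
  by simp

lemma char_central_cmod: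
  assumes G: "group G" and fin: "finite (carrier G)" and irr: "is_irr_rep G n \<sigma>"
    and z: "z \<in> group_center G"
  shows "cmod (character_of G \<sigma> z) = cmod (character_of G \<sigma> \<one>\<^bsub>G\<^esub>)"
proof -
  have zc: "z \<in> carrier G" and comm: "\<forall>g\<in>carrier G. z \<otimes>\<^bsub>G\<^esub> g = g \<otimes>\<^bsub>G\<^esub> z"
    using z unfolding group_center_def by auto
  obtain c where c: "\<sigma> z = c \<cdot>\<^sub>m 1\<^sub>m n" and cm: "cmod c = 1"
    using central_scalar[OF G fin irr zc comm] by blast
  have "character_of G \<sigma> z = c * of_nat n"
    unfolding character_of_def using zc c by (simp add: mat_trace_smult_one)
  then have "cmod (character_of G \<sigma> z) = real n" using cm by (simp add: norm_mult)
  moreover have "character_of G \<sigma> \<one>\<^bsub>G\<^esub> = of_nat n" using char_one[OF G is_irr_repD(1)[OF irr]] .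
  ultimately show ?thesis by simp
qed

lemma infl_N_irr:
  assumes M: "group M" and N: "group N" and irr: "is_irr_rep N m \<sigma>"
  shows "is_irr_rep (M \<times>\<times> N) m (\<lambda>p. \<sigma> (snd p))"
proof -
  note rep = is_irr_repD(1)[OF irr]
  have "is_rep (M \<times>\<times> N) m (\<lambda>p. \<sigma> (snd p))"
    unfolding is_rep_def
  proof (intro conjI ballI)
    fix p assume "p \<in> carrier (M \<times>\<times> N)"
    then show "\<sigma> (snd p) \<in> carrier_mat m m" using is_repD(1)[OF rep] by auto
  next
    show "\<sigma> (snd \<one>\<^bsub>M \<times>\<times> N\<^esub>) = 1\<^sub>m m" using is_repD(2)[OF rep] by simp
  next
    fix p q assume "p \<in> carrier (M \<times>\<times> N)" "q \<in> carrier (M \<times>\<times> N)"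
    then show "\<sigma> (snd (p \<otimes>\<^bsub>M \<times>\<times> N\<^esub> q)) = \<sigma> (snd p) * \<sigma> (snd q)"
      using is_repD(3)[OF rep] by (auto simp: mult_DirProd')
  qed
  moreover have "W = {0\<^sub>v m} \<or> W = carrier_vec m"
    if W: "is_subspace m W" and inv: "\<forall>p\<in>carrier (M \<times>\<times> N). \<forall>w\<in>W. \<sigma> (snd p) *\<^sub>v w \<in> W" for W
  proof -
    have "\<forall>b\<in>carrier N. \<forall>w\<in>W. \<sigma> b *\<^sub>v w \<in> W"
    proof (intro ballI)
      fix b w assume b: "b \<in> carrier N" and w: "w \<in> W"
      have "(\<one>\<^bsub>M\<^esub>, b) \<in> carrier (M \<times>\<times> N)" using b group.is_monoid[OF M] monoid.one_closed by simp
      then show "\<sigma> b *\<^sub>v w \<in> W" using inv w by force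
    qed
    then show ?thesis using is_irr_repD(3)[OF irr W] by blast
  qed
  ultimately show ?thesis using is_irr_repD(2)[OF irr] unfolding is_irr_rep_def by blast
qed

lemma infl_M_irr:
  assumes M: "group M" and N: "group N" and irr: "is_irr_rep M m \<theta>"
  shows "is_irr_rep (M \<times>\<times> N) m (\<lambda>p. \<theta> (fst p))"
proof -
  note rep = is_irr_repD(1)[OF irr]
  have "is_rep (M \<times>\<times> N) m (\<lambda>p. \<theta> (fst p))"
    unfolding is_rep_def
  proof (intro conjI ballI)
    fix p assume "p \<in> carrier (M \<times>\<times> N)"
    then show "\<theta> (fst p) \<in> carrier_mat m m" using is_repD(1)[OF rep] by auto
  next
    show "\<theta> (fst \<one>\<^bsub>M \<times>\<times> N\<^esub>) = 1\<^sub>m m" using is_repD(2)[OF rep] by simp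
  next
    fix p q assume "p \<in> carrier (M \<times>\<times> N)" "q \<in> carrier (M \<times>\<times> N)"
    then show "\<theta> (fst (p \<otimes>\<^bsub>M \<times>\<times> N\<^esub> q)) = \<theta> (fst p) * \<theta> (fst q)"
      using is_repD(3)[OF rep] by (auto simp: mult_DirProd')
  qed
  moreover have "W = {0\<^sub>v m} \<or> W = carrier_vec m"
    if W: "is_subspace m W" and inv: "\<forall>p\<in>carrier (M \<times>\<times> N). \<forall>w\<in>W. \<theta> (fst p) *\<^sub>v w \<in> W" for W
  proof -
    have "\<forall>a\<in>carrier M. \<forall>w\<in>W. \<theta> a *\<^sub>v w \<in> W"
    proof (intro ballI)
      fix a w assume a: "a \<in> carrier M" and w: "w \<in> W"
      have "(a, \<one>\<^bsub>N\<^esub>) \<in> carrier (M \<times>\<times> N)" using a group.is_monoid[OF N] monoid.one_closed by simp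
      then show "\<theta> a *\<^sub>v w \<in> W" using inv w by force
    qed
    then show ?thesis using is_irr_repD(3)[OF irr W] by blast
  qed
  ultimately show ?thesis using is_irr_repD(2)[OF irr] unfolding is_irr_rep_def by blast
qed

lemma center_DirProd:
  assumes M: "group M" and N: "group N"
  shows "group_center (M \<times>\<times> N) = group_center M \<times> group_center N"
proof
  show "group_center (M \<times>\<times> N) \<subseteq> group_center M \<times> group_center N"
  proof
    fix x assume x: "x \<in> group_center (M \<times>\<times> N)"
    obtain a b where ab: "x = (a,b)" by (cases x)
    have a: "a \<in> carrier M" and b: "b \<in> carrier N" using x ab unfolding group_center_def by auto
    have c: "\<And>g h. g \<in> carrier M \<Longrightarrow> h \<in> carrier N \<Longrightarrow> a \<otimes>\<^bsub>M\<^esub> g = g \<otimes>\<^bsub>M\<^esub> a \<and> b \<otimes>\<^bsub>N\<^esub> h = h \<otimes>\<^bsub>N\<^esub> b"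
      using x ab unfolding group_center_def by auto
    have "a \<in> group_center M"
      unfolding group_center_def using a c group.is_monoid[OF N] monoid.one_closed by blast
    moreover have "b \<in> group_center N"
      unfolding group_center_def using b c group.is_monoid[OF M] monoid.one_closed by blast
    ultimately show "x \<in> group_center M \<times> group_center N" using ab by simp
  qed
next
  show "group_center M \<times> group_center N \<subseteq> group_center (M \<times>\<times> N)"
    unfolding group_center_def by auto
qed

lemma noncomm_witness:
  assumes M: "group M" and nc: "\<not> comm_group M"
  shows "\<exists>a\<in>carrier M. a \<notin> group_center M"
proof (rule ccontr)
  assume "\<not> ?thesis"
  then have "\<And>x y. x \<in> carrier M \<Longrightarrow> y \<in> carrier M \<Longrightarrow> x \<otimes>\<^bsub>M\<^esub> y = y \<otimes>\<^bsub>M\<^esub> x"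
    unfolding group_center_def by auto
  then have "comm_group M" using group.group_comm_groupI[OF M] by blast
  then show False using nc by simp
qed

lemma noncomm_DirProd:
  assumes M: "group M" and N: "group N" and nc: "\<not> comm_group M"
  shows "\<not> comm_group (M \<times>\<times> N)"
proof
  assume c: "comm_group (M \<times>\<times> N)"
  have "x \<otimes>\<^bsub>M\<^esub> y = y \<otimes>\<^bsub>M\<^esub> x" if x: "x \<in> carrier M" and y: "y \<in> carrier M" for x y
  proof -
    have "(x, \<one>\<^bsub>N\<^esub>) \<otimes>\<^bsub>M \<times>\<times> N\<^esub> (y, \<one>\<^bsub>N\<^esub>) = (y, \<one>\<^bsub>N\<^esub>) \<otimes>\<^bsub>M \<times>\<times> N\<^esub> (x, \<one>\<^bsub>N\<^esub>)"
    proof -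
      have oN: "\<one>\<^bsub>N\<^esub> \<in> carrier N" using group.is_monoid[OF N] monoid.one_closed by auto
      have "(x, \<one>\<^bsub>N\<^esub>) \<in> carrier (M \<times>\<times> N)" "(y, \<one>\<^bsub>N\<^esub>) \<in> carrier (M \<times>\<times> N)"
        using x y oN by auto
      then show ?thesis by (rule comm_monoid.m_comm[OF comm_group.axioms(1)[OF c]])
    qed
    then show ?thesis by simp
  qed
  then have "comm_group M" using group.group_comm_groupI[OF M] by blast
  then show False using nc by simp
qed

lemma X_witness_N:
  assumes M: "group M" and N: "group N" and finN: "finite (carrier N)"
    and irr: "is_irr_rep N m \<sigma>" and a: "a \<in> carrier M" and an: "a \<notin> group_center M"
  shows "character_of (M \<times>\<times> N) (\<lambda>p. \<sigma> (snd p)) \<in> X_set (M \<times>\<times> N)"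
proof -
  let ?\<chi> = "character_of (M \<times>\<times> N) (\<lambda>p. \<sigma> (snd p))"
  have oM: "\<one>\<^bsub>M\<^esub> \<in> carrier M" and oN: "\<one>\<^bsub>N\<^esub> \<in> carrier N"
    using group.is_monoid[OF M] group.is_monoid[OF N] monoid.one_closed by auto
  have chv: "?\<chi> (x, y) = character_of N \<sigma> y" if "x \<in> carrier M" "y \<in> carrier N" for x y
    using that unfolding character_of_def by simp
  have "?\<chi> \<in> Irr (M \<times>\<times> N)" unfolding Irr_def using infl_N_irr[OF M N irr] by blast
  moreover have "group_center (M \<times>\<times> N) \<subseteq> char_center (M \<times>\<times> N) ?\<chi>"
  proof
    fix x assume x: "x \<in> group_center (M \<times>\<times> N)"
    then obtain a' b' where ab: "x = (a', b')" "a' \<in> group_center M" "b' \<in> group_center N"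
      using center_DirProd[OF M N] by auto
    have a': "a' \<in> carrier M" and b': "b' \<in> carrier N" using ab unfolding group_center_def by auto
    have "cmod (?\<chi> x) = cmod (character_of N \<sigma> \<one>\<^bsub>N\<^esub>)"
      using ab chv[OF a' b'] char_central_cmod[OF N finN irr ab(3)] by simp
    then show "x \<in> char_center (M \<times>\<times> N) ?\<chi>"
      unfolding char_center_def using ab a' b' chv[OF oM oN] by simp
  qed
  moreover have "(a, \<one>\<^bsub>N\<^esub>) \<in> char_center (M \<times>\<times> N) ?\<chi>"
    unfolding char_center_def using a oN chv[OF a oN] chv[OF oM oN] by simp
  moreover have "(a, \<one>\<^bsub>N\<^esub>) \<notin> group_center (M \<times>\<times> N)"
    using center_DirProd[OF M N] an by simp
  ultimately show ?thesis unfolding X_set_def by blast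
qed

lemma X_witness_M:
  assumes M: "group M" and N: "group N" and finM: "finite (carrier M)"
    and irr: "is_irr_rep M m \<theta>" and b: "b \<in> carrier N" and bn: "b \<notin> group_center N"
  shows "character_of (M \<times>\<times> N) (\<lambda>p. \<theta> (fst p)) \<in> X_set (M \<times>\<times> N)"
proof -
  let ?\<chi> = "character_of (M \<times>\<times> N) (\<lambda>p. \<theta> (fst p))"
  have oM: "\<one>\<^bsub>M\<^esub> \<in> carrier M" and oN: "\<one>\<^bsub>N\<^esub> \<in> carrier N"
    using group.is_monoid[OF M] group.is_monoid[OF N] monoid.one_closed by auto
  have chv: "?\<chi> (x, y) = character_of M \<theta> x" if "x \<in> carrier M" "y \<in> carrier N" for x y
    using that unfolding character_of_def by simp
  have "?\<chi> \<in> Irr (M \<times>\<times> N)" unfolding Irr_def using infl_M_irr[OF M N irr] by blast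
  moreover have "group_center (M \<times>\<times> N) \<subseteq> char_center (M \<times>\<times> N) ?\<chi>"
  proof
    fix x assume x: "x \<in> group_center (M \<times>\<times> N)"
    then obtain a' b' where ab: "x = (a', b')" "a' \<in> group_center M" "b' \<in> group_center N"
      using center_DirProd[OF M N] by auto
    have a': "a' \<in> carrier M" and b': "b' \<in> carrier N" using ab unfolding group_center_def by auto
    have "cmod (?\<chi> x) = cmod (character_of M \<theta> \<one>\<^bsub>M\<^esub>)"
      using ab chv[OF a' b'] char_central_cmod[OF M finM irr ab(2)] by simp
    then show "x \<in> char_center (M \<times>\<times> N) ?\<chi>"
      unfolding char_center_def using ab a' b' chv[OF oM oN] by simp
  qed
  moreover have "(\<one>\<^bsub>M\<^esub>, b) \<in> char_center (M \<times>\<times> N) ?\<chi>"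
    unfolding char_center_def using b oM chv[OF oM b] chv[OF oM oN] by simp
  moreover have "(\<one>\<^bsub>M\<^esub>, b) \<notin> group_center (M \<times>\<times> N)"
    using center_DirProd[OF M N] bn by simp
  ultimately show ?thesis unfolding X_set_def by blast
qed

lemma X_infl_M:
  assumes M: "group M" and N: "group N"
    and irr: "is_irr_rep M m \<theta>" and X: "character_of M \<theta> \<in> X_set M"
  shows "character_of (M \<times>\<times> N) (\<lambda>p. \<theta> (fst p)) \<in> X_set (M \<times>\<times> N)"
proof -
  let ?\<chi> = "character_of (M \<times>\<times> N) (\<lambda>p. \<theta> (fst p))"
  have oM: "\<one>\<^bsub>M\<^esub> \<in> carrier M" and oN: "\<one>\<^bsub>N\<^esub> \<in> carrier N"
    using group.is_monoid[OF M] group.is_monoid[OF N] monoid.one_closed by auto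
  have chv: "?\<chi> (x, y) = character_of M \<theta> x" if "x \<in> carrier M" "y \<in> carrier N" for x y
    using that unfolding character_of_def by simp
  have sub: "group_center M \<subset> char_center M (character_of M \<theta>)" using X unfolding X_set_def by auto
  then obtain a where a: "a \<in> char_center M (character_of M \<theta>)" and an: "a \<notin> group_center M" by blast
  have ac: "a \<in> carrier M" using a unfolding char_center_def by auto
  have "?\<chi> \<in> Irr (M \<times>\<times> N)" unfolding Irr_def using infl_M_irr[OF M N irr] by blast
  moreover have "group_center (M \<times>\<times> N) \<subseteq> char_center (M \<times>\<times> N) ?\<chi>"
  proof
    fix x assume x: "x \<in> group_center (M \<times>\<times> N)"
    then obtain a' b' where ab: "x = (a', b')" "a' \<in> group_center M" "b' \<in> group_center N"
      using center_DirProd[OF M N] by auto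
    have a': "a' \<in> carrier M" and b': "b' \<in> carrier N" using ab unfolding group_center_def by auto
    have "a' \<in> char_center M (character_of M \<theta>)" using ab(2) sub by blast
    then have "cmod (?\<chi> x) = cmod (character_of M \<theta> \<one>\<^bsub>M\<^esub>)"
      using ab chv[OF a' b'] unfolding char_center_def by simp
    then show "x \<in> char_center (M \<times>\<times> N) ?\<chi>"
      unfolding char_center_def using ab a' b' chv[OF oM oN] by simp
  qed
  moreover have "(a, \<one>\<^bsub>N\<^esub>) \<in> char_center (M \<times>\<times> N) ?\<chi>"
    using a ac oN chv[OF ac oN] chv[OF oM oN] unfolding char_center_def by simp
  moreover have "(a, \<one>\<^bsub>N\<^esub>) \<notin> group_center (M \<times>\<times> N)"
    using center_DirProd[OF M N] an by simp
  ultimately show ?thesis unfolding X_set_def by blast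
qed




lemma comm_center:
  assumes "comm_group N"
  shows "group_center N = carrier N"
  unfolding group_center_def using comm_monoid.m_comm[OF comm_group.axioms(1)[OF assms]] by auto

lemma part2_sup:
  assumes M: "group M" and N: "group N" and finM: "finite (carrier M)" and finN: "finite (carrier N)"
    and cN: "comm_group N" and X: "\<chi> \<in> X_set (M \<times>\<times> N)"
    and g: "g \<in> carrier M" and gker: "\<forall>\<theta>'\<in>X_set M. g \<in> char_kernel M \<theta>'"
  shows "(g, \<one>\<^bsub>N\<^esub>) \<in> char_kernel (M \<times>\<times> N) \<chi>"
proof -
  have MN: "group (M \<times>\<times> N)" using DirProd_group[OF M N] .
  have finMN: "finite (carrier (M \<times>\<times> N))" using finM finN by simp
  have oM: "\<one>\<^bsub>M\<^esub> \<in> carrier M" and oN: "\<one>\<^bsub>N\<^esub> \<in> carrier N"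
    using group.is_monoid[OF M] group.is_monoid[OF N] monoid.one_closed by auto
  from X obtain m \<rho> where irr: "is_irr_rep (M \<times>\<times> N) m \<rho>" and \<chi>: "\<chi> = character_of (M \<times>\<times> N) \<rho>"
    and strict: "group_center (M \<times>\<times> N) \<subset> char_center (M \<times>\<times> N) \<chi>"
    unfolding X_set_def Irr_def by blast
  note rep = is_irr_repD(1)[OF irr]
  note rc = is_repD(1)[OF rep]
  note rm = is_repD(3)[OF rep]
  have r1: "\<rho> (\<one>\<^bsub>M\<^esub>, \<one>\<^bsub>N\<^esub>) = 1\<^sub>m m" using is_repD(2)[OF rep] by simp
  define \<theta> where "\<theta> a = \<rho> (a, \<one>\<^bsub>N\<^esub>)" for a
  have scal: "\<exists>c. \<rho> (\<one>\<^bsub>M\<^esub>, b) = c \<cdot>\<^sub>m 1\<^sub>m m \<and> cmod c = 1" if b: "b \<in> carrier N" for b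
  proof (rule central_scalar[OF MN finMN irr])
    show "(\<one>\<^bsub>M\<^esub>, b) \<in> carrier (M \<times>\<times> N)" using oM b by simp
    show "\<forall>p\<in>carrier (M \<times>\<times> N). (\<one>\<^bsub>M\<^esub>, b) \<otimes>\<^bsub>M \<times>\<times> N\<^esub> p = p \<otimes>\<^bsub>M \<times>\<times> N\<^esub> (\<one>\<^bsub>M\<^esub>, b)"
    proof
      fix p assume p: "p \<in> carrier (M \<times>\<times> N)"
      then obtain x y where xy: "p = (x,y)" "x \<in> carrier M" "y \<in> carrier N" by auto
      have "b \<otimes>\<^bsub>N\<^esub> y = y \<otimes>\<^bsub>N\<^esub> b" using comm_monoid.m_comm[OF comm_group.axioms(1)[OF cN] b xy(3)] .
      then show "(\<one>\<^bsub>M\<^esub>, b) \<otimes>\<^bsub>M \<times>\<times> N\<^esub> p = p \<otimes>\<^bsub>M \<times>\<times> N\<^esub> (\<one>\<^bsub>M\<^esub>, b)"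
        using xy group.is_monoid[OF M] by (simp add: monoid.l_one monoid.r_one)
    qed
  qed
  have split: "\<rho> (a, b) = \<theta> a * \<rho> (\<one>\<^bsub>M\<^esub>, b)" if a: "a \<in> carrier M" and b: "b \<in> carrier N" for a b
  proof -
    have "(a, b) = (a, \<one>\<^bsub>N\<^esub>) \<otimes>\<^bsub>M \<times>\<times> N\<^esub> (\<one>\<^bsub>M\<^esub>, b)"
      using a b group.is_monoid[OF M] group.is_monoid[OF N] by (simp add: monoid.l_one monoid.r_one)
    then show ?thesis unfolding \<theta>_def using rm[of "(a, \<one>\<^bsub>N\<^esub>)" "(\<one>\<^bsub>M\<^esub>, b)"] a b oM oN by simp
  qed
  have \<theta>c: "\<theta> a \<in> carrier_mat m m" if "a \<in> carrier M" for a
    unfolding \<theta>_def using rc that oN by simp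
  have scal2: "\<exists>c. \<rho> (a, b) = c \<cdot>\<^sub>m \<theta> a \<and> cmod c = 1" if a: "a \<in> carrier M" and b: "b \<in> carrier N" for a b
  proof -
    obtain c where c: "\<rho> (\<one>\<^bsub>M\<^esub>, b) = c \<cdot>\<^sub>m 1\<^sub>m m" "cmod c = 1" using scal[OF b] by blast
    have "\<rho> (a, b) = \<theta> a * (c \<cdot>\<^sub>m 1\<^sub>m m)" using split[OF a b] c by simp
    also have "\<dots> = c \<cdot>\<^sub>m \<theta> a" using mult_smult_distrib[OF \<theta>c[OF a] one_carrier_mat, where k=c] \<theta>c[OF a] by simp
    finally show ?thesis using c by blast
  qed
  have \<theta>rep: "is_rep M m \<theta>"
    unfolding is_rep_def
  proof (intro conjI ballI)
    show "\<theta> a \<in> carrier_mat m m" if "a \<in> carrier M" for a using \<theta>c[OF that] .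
    show "\<theta> \<one>\<^bsub>M\<^esub> = 1\<^sub>m m" unfolding \<theta>_def using r1 .
    show "\<theta> (a \<otimes>\<^bsub>M\<^esub> a') = \<theta> a * \<theta> a'" if a: "a \<in> carrier M" and a': "a' \<in> carrier M" for a a'
    proof -
      have "(a \<otimes>\<^bsub>M\<^esub> a', \<one>\<^bsub>N\<^esub>) = (a, \<one>\<^bsub>N\<^esub>) \<otimes>\<^bsub>M \<times>\<times> N\<^esub> (a', \<one>\<^bsub>N\<^esub>)"
        using group.is_monoid[OF N] oN by (simp add: monoid.l_one)
      then show ?thesis unfolding \<theta>_def using rm[of "(a, \<one>\<^bsub>N\<^esub>)" "(a', \<one>\<^bsub>N\<^esub>)"] a a' oN by simp
    qed
  qed
  have \<theta>irr: "is_irr_rep M m \<theta>"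
    unfolding is_irr_rep_def
  proof (intro conjI allI impI)
    show "is_rep M m \<theta>" by fact
    show "0 < m" using is_irr_repD(2)[OF irr] .
    fix W assume asm: "is_subspace m W \<and> (\<forall>g\<in>carrier M. \<forall>w\<in>W. \<theta> g *\<^sub>v w \<in> W)"
    then have W: "is_subspace m W" and inv: "\<forall>g\<in>carrier M. \<forall>w\<in>W. \<theta> g *\<^sub>v w \<in> W" by auto
    have "\<forall>p\<in>carrier (M \<times>\<times> N). \<forall>w\<in>W. \<rho> p *\<^sub>v w \<in> W"
    proof (intro ballI)
      fix p w assume p: "p \<in> carrier (M \<times>\<times> N)" and w: "w \<in> W"
      then obtain a b where ab: "p = (a,b)" "a \<in> carrier M" "b \<in> carrier N" by auto
      obtain c where c: "\<rho> (a, b) = c \<cdot>\<^sub>m \<theta> a" using scal2[OF ab(2,3)] by blast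
      have wc: "w \<in> carrier_vec m" using subspace_carrier[OF W w] .
      have "\<rho> p *\<^sub>v w = c \<cdot>\<^sub>v (\<theta> a *\<^sub>v w)" using ab(1) c \<theta>c[OF ab(2)] wc by auto
      then show "\<rho> p *\<^sub>v w \<in> W" using subspace_smult[OF W] inv ab(2) w by simp
    qed
    then show "W = {0\<^sub>v m} \<or> W = carrier_vec m" using is_irr_repD(3)[OF irr W] by blast
  qed
  have chv: "cmod (\<chi> (a, b)) = cmod (character_of M \<theta> a)" if a: "a \<in> carrier M" and b: "b \<in> carrier N" for a b
  proof -
    obtain c where c: "\<rho> (a, b) = c \<cdot>\<^sub>m \<theta> a" "cmod c = 1" using scal2[OF a b] by blast
    have "\<chi> (a, b) = c * mat_trace (\<theta> a)" unfolding \<chi> character_of_def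
      using a b c mat_trace_smult[OF \<theta>c[OF a]] by simp
    then show ?thesis using c a unfolding character_of_def by (simp add: norm_mult)
  qed
  have \<theta>X: "character_of M \<theta> \<in> X_set M"
    unfolding X_set_def
  proof (intro CollectI conjI psubsetI)
    show "character_of M \<theta> \<in> Irr M" unfolding Irr_def using \<theta>irr by blast
    show sub: "group_center M \<subseteq> char_center M (character_of M \<theta>)"
    proof
      fix z assume z: "z \<in> group_center M"
      then show "z \<in> char_center M (character_of M \<theta>)"
        unfolding char_center_def using char_central_cmod[OF M finM \<theta>irr z] z
        by (auto simp: group_center_def)
    qed
    from strict obtain x where x: "x \<in> char_center (M \<times>\<times> N) \<chi>" and xn: "x \<notin> group_center (M \<times>\<times> N)"
      by blast
    then obtain a b where ab: "x = (a, b)" "a \<in> carrier M" "b \<in> carrier N"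
      unfolding char_center_def by auto
    have an: "a \<notin> group_center M" using xn ab center_DirProd[OF M N] comm_center[OF cN] by auto
    have "cmod (character_of M \<theta> a) = cmod (character_of M \<theta> \<one>\<^bsub>M\<^esub>)"
      using x ab chv[OF ab(2,3)] chv[OF oM oN] unfolding char_center_def by simp
    then have "a \<in> char_center M (character_of M \<theta>)" unfolding char_center_def using ab by simp
    then show "group_center M \<noteq> char_center M (character_of M \<theta>)" using an by blast
  qed
  have "g \<in> char_kernel M (character_of M \<theta>)" using gker \<theta>X by blast
  then have "mat_trace (\<theta> g) = mat_trace (\<theta> \<one>\<^bsub>M\<^esub>)"
    unfolding char_kernel_def character_of_def using oM by auto
  then have "\<chi> (g, \<one>\<^bsub>N\<^esub>) = \<chi> \<one>\<^bsub>M \<times>\<times> N\<^esub>"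
    unfolding \<chi> character_of_def \<theta>_def using g oM oN by simp
  then show ?thesis unfolding char_kernel_def using g oN by simp
qed

theorem lemma3p2:
  fixes M :: "('a, 'c) monoid_scheme" and N :: "('b, 'd) monoid_scheme"
  assumes "group M" and "group N"
    and "finite (carrier M)" and "finite (carrier N)"
  shows "(\<not> comm_group M \<and> \<not> comm_group N \<longrightarrow>
            K_grp (M \<times>\<times> N) = {\<one>\<^bsub>M \<times>\<times> N\<^esub>}) \<and>
         (\<not> comm_group M \<and> comm_group N \<longrightarrow>
            K_grp (M \<times>\<times> N) = K_grp M \<times> {\<one>\<^bsub>N\<^esub>})"
proof -
  note M = assms(1) and N = assms(2) and finM = assms(3) and finN = assms(4)
  have oM: "\<one>\<^bsub>M\<^esub> \<in> carrier M" and oN: "\<one>\<^bsub>N\<^esub> \<in> carrier N"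
    using group.is_monoid[OF M] group.is_monoid[OF N] monoid.one_closed by auto
  have KMN: "K_grp (M \<times>\<times> N) = carrier (M \<times>\<times> N) \<inter> (\<Inter>\<chi>\<in>X_set (M \<times>\<times> N). char_kernel (M \<times>\<times> N) \<chi>)"
    if "\<not> comm_group M"
    unfolding K_grp_def using noncomm_DirProd[OF M N that] by simp
  have snd1: "h = \<one>\<^bsub>N\<^esub>"
    if ncM: "\<not> comm_group M" and x: "(g, h) \<in> K_grp (M \<times>\<times> N)" for g h
  proof (rule ccontr)
    assume h1: "h \<noteq> \<one>\<^bsub>N\<^esub>"
    have gh: "g \<in> carrier M" "h \<in> carrier N" using x KMN[OF ncM] by auto
    obtain m \<sigma> where irr: "is_irr_rep N m \<sigma>" and tr: "mat_trace (\<sigma> h) \<noteq> of_nat m"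
      using irr_separates[OF N finN gh(2) h1] by blast
    obtain a where a: "a \<in> carrier M" "a \<notin> group_center M" using noncomm_witness[OF M ncM] by blast
    have X: "character_of (M \<times>\<times> N) (\<lambda>p. \<sigma> (snd p)) \<in> X_set (M \<times>\<times> N)"
      using X_witness_N[OF M N finN irr a] .
    then have "(g, h) \<in> char_kernel (M \<times>\<times> N) (character_of (M \<times>\<times> N) (\<lambda>p. \<sigma> (snd p)))"
      using x KMN[OF ncM] by blast
    then have "mat_trace (\<sigma> h) = mat_trace (\<sigma> \<one>\<^bsub>N\<^esub>)"
      unfolding char_kernel_def character_of_def using gh oM oN by simp
    then show False using tr is_repD(2)[OF is_irr_repD(1)[OF irr]] by simp
  qed
  have fst1: "g = \<one>\<^bsub>M\<^esub>"
    if ncM: "\<not> comm_group M" and ncN: "\<not> comm_group N" and x: "(g, h) \<in> K_grp (M \<times>\<times> N)" for g h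
  proof (rule ccontr)
    assume g1: "g \<noteq> \<one>\<^bsub>M\<^esub>"
    have gh: "g \<in> carrier M" "h \<in> carrier N" using x KMN[OF ncM] by auto
    obtain m \<theta> where irr: "is_irr_rep M m \<theta>" and tr: "mat_trace (\<theta> g) \<noteq> of_nat m"
      using irr_separates[OF M finM gh(1) g1] by blast
    obtain b where b: "b \<in> carrier N" "b \<notin> group_center N" using noncomm_witness[OF N ncN] by blast
    have X: "character_of (M \<times>\<times> N) (\<lambda>p. \<theta> (fst p)) \<in> X_set (M \<times>\<times> N)"
      using X_witness_M[OF M N finM irr b] .
    then have "(g, h) \<in> char_kernel (M \<times>\<times> N) (character_of (M \<times>\<times> N) (\<lambda>p. \<theta> (fst p)))"
      using x KMN[OF ncM] by blast
    then have "mat_trace (\<theta> g) = mat_trace (\<theta> \<one>\<^bsub>M\<^esub>)"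
      unfolding char_kernel_def character_of_def using gh oM oN by simp
    then show False using tr is_repD(2)[OF is_irr_repD(1)[OF irr]] by simp
  qed
  have one_in: "\<one>\<^bsub>M \<times>\<times> N\<^esub> \<in> K_grp (M \<times>\<times> N)" if ncM: "\<not> comm_group M"
    unfolding KMN[OF ncM] char_kernel_def using oM oN by auto
  have part1: "K_grp (M \<times>\<times> N) = {\<one>\<^bsub>M \<times>\<times> N\<^esub>}" if ncM: "\<not> comm_group M" and ncN: "\<not> comm_group N"
  proof
    show "K_grp (M \<times>\<times> N) \<subseteq> {\<one>\<^bsub>M \<times>\<times> N\<^esub>}"
    proof
      fix x assume x: "x \<in> K_grp (M \<times>\<times> N)"
      obtain g h where gh: "x = (g, h)" by (cases x)
      show "x \<in> {\<one>\<^bsub>M \<times>\<times> N\<^esub>}"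
        using snd1[OF ncM x[unfolded gh]] fst1[OF ncM ncN x[unfolded gh]] gh by simp
    qed
    show "{\<one>\<^bsub>M \<times>\<times> N\<^esub>} \<subseteq> K_grp (M \<times>\<times> N)" using one_in[OF ncM] by simp
  qed
  have part2: "K_grp (M \<times>\<times> N) = K_grp M \<times> {\<one>\<^bsub>N\<^esub>}" if ncM: "\<not> comm_group M" and cN: "comm_group N"
  proof
    have KM: "K_grp M = carrier M \<inter> (\<Inter>\<theta>\<in>X_set M. char_kernel M \<theta>)"
      unfolding K_grp_def using ncM by simp
    show "K_grp (M \<times>\<times> N) \<subseteq> K_grp M \<times> {\<one>\<^bsub>N\<^esub>}"
    proof
      fix x assume x: "x \<in> K_grp (M \<times>\<times> N)"
      obtain g h where gh: "x = (g, h)" by (cases x)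
      have h: "h = \<one>\<^bsub>N\<^esub>" using snd1[OF ncM x[unfolded gh]] .
      have g: "g \<in> carrier M" using x gh KMN[OF ncM] by auto
      have "g \<in> char_kernel M \<theta>'" if X: "\<theta>' \<in> X_set M" for \<theta>'
      proof -
        from X obtain m \<theta> where irr: "is_irr_rep M m \<theta>" and th: "\<theta>' = character_of M \<theta>"
          unfolding X_set_def Irr_def by blast
        have "character_of (M \<times>\<times> N) (\<lambda>p. \<theta> (fst p)) \<in> X_set (M \<times>\<times> N)"
          using X_infl_M[OF M N irr] X th by simp
        then have "(g, h) \<in> char_kernel (M \<times>\<times> N) (character_of (M \<times>\<times> N) (\<lambda>p. \<theta> (fst p)))"
          using x gh KMN[OF ncM] by blast
        then have "character_of M \<theta> g = character_of M \<theta> \<one>\<^bsub>M\<^esub>"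
          unfolding char_kernel_def character_of_def using g h oM oN by simp
        then show ?thesis unfolding char_kernel_def th using g by simp
      qed
      then have "g \<in> K_grp M" unfolding KM using g by blast
      then show "x \<in> K_grp M \<times> {\<one>\<^bsub>N\<^esub>}" using gh h by simp
    qed
    show "K_grp M \<times> {\<one>\<^bsub>N\<^esub>} \<subseteq> K_grp (M \<times>\<times> N)"
    proof
      fix x assume x: "x \<in> K_grp M \<times> {\<one>\<^bsub>N\<^esub>}"
      then obtain g where gx: "x = (g, \<one>\<^bsub>N\<^esub>)" and gK: "g \<in> K_grp M" by auto
      have g: "g \<in> carrier M" and gker: "\<forall>\<theta>'\<in>X_set M. g \<in> char_kernel M \<theta>'"
        using gK unfolding KM by auto
      have "\<forall>\<chi>\<in>X_set (M \<times>\<times> N). (g, \<one>\<^bsub>N\<^esub>) \<in> char_kernel (M \<times>\<times> N) \<chi>"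
        using part2_sup[OF M N finM finN cN _ g gker] by blast
      then show "x \<in> K_grp (M \<times>\<times> N)" unfolding KMN[OF ncM] gx using g oN by auto
    qed
  qed
  show ?thesis using part1 part2 by blast
qed


end
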